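(* Let $R$ be an integral domain which is an avoidance ring, and let $S$ be a ring with $R\subseteq S\subseteq \operatorname{Frac}(R)$. Then $S$ is an avoidance ring.
   Context: All rings are commutative with $1\neq 0$. An ideal $I$ of a ring $R$ has avoidance if whenever $I_1,\ldots,I_n$ are finitely many ideals of $R$ with $I\subseteq\bigcup_{k=1}^n I_k$, then $I\subseteq I_k$ for some $k$. A ring is an avoidance ring if every ideal of it has avoidance. *)

theory Defs
  imports Main
begin

text \<open>Rings are modelled as subrings (with the same 1) of an ambient field.
  A subring of a field is exactly an integral domain (up to isomorphism), and
  the fraction field of a subring R is the set of quotients a/b, a,b in R, b nonzero.\<close>

definition subring_of :: "'a::field set \<Rightarrow> bool" where
  "subring_of S \<longleftrightarrow> 0 \<in> S \<and> 1 \<in> S \<and>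
     (\<forall>x\<in>S. \<forall>y\<in>S. x + y \<in> S \<and> x * y \<in> S \<and> - x \<in> S)"

definition frac_field :: "'a::field set \<Rightarrow> 'a set" where
  "frac_field R = {a / b | a b. a \<in> R \<and> b \<in> R \<and> b \<noteq> 0}"

definition ideal_of :: "'a::field set \<Rightarrow> 'a set \<Rightarrow> bool" where
  "ideal_of S I \<longleftrightarrow> I \<subseteq> S \<and> 0 \<in> I \<and>
     (\<forall>x\<in>I. \<forall>y\<in>I. x + y \<in> I) \<and> (\<forall>x\<in>I. - x \<in> I) \<and>
     (\<forall>s\<in>S. \<forall>x\<in>I. s * x \<in> I)"

definition has_avoidance :: "'a::field set \<Rightarrow> 'a set \<Rightarrow> bool" where
  "has_avoidance S I \<longleftrightarrow>
     (\<forall>F. finite F \<and> (\<forall>J\<in>F. ideal_of S J) \<and> I \<subseteq> \<Union>F \<longrightarrow> (\<exists>J\<in>F. I \<subseteq> J))"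

definition avoidance_ring :: "'a::field set \<Rightarrow> bool" where
  "avoidance_ring S \<longleftrightarrow> (\<forall>I. ideal_of S I \<longrightarrow> has_avoidance S I)"

end

theory Submission
  imports Defs
begin

lemma common_denom:
  fixes R :: "'a::field set"
  assumes "subring_of R" "finite X" "X \<subseteq> frac_field R"
  shows "\<exists>d\<in>R. d \<noteq> 0 \<and> (\<forall>x\<in>X. d * x \<in> R)"
  using assms(2,3)
proof (induction X rule: finite_induct)
  case empty
  have "(1::'a) \<in> R" using assms(1) by (simp add: subring_of_def)
  then show ?case by (intro bexI[of _ 1]) auto
next
  case (insert x X)
  then obtain d where d: "d \<in> R" "d \<noteq> 0" "\<forall>y\<in>X. d * y \<in> R" by auto
  from insert obtain a b where ab: "a \<in> R" "b \<in> R" "b \<noteq> 0" "x = a / b"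
    by (auto simp: frac_field_def)
  have "d * b \<in> R" using d ab assms(1) by (auto simp: subring_of_def)
  moreover have "d * b \<noteq> 0" using d ab by simp
  moreover have "d * b * x \<in> R" using ab d assms(1) by (auto simp: subring_of_def)
  moreover have "\<forall>y\<in>X. d * b * y \<in> R"
  proof
    fix y assume "y \<in> X"
    then have "d * y \<in> R" using d by auto
    then have "b * (d * y) \<in> R" using ab assms(1) by (auto simp: subring_of_def)
    then show "d * b * y \<in> R" by (simp add: ac_simps)
  qed
  ultimately show ?case by blast
qed

theorem theorem3p13:
  fixes R S :: "'a::field set"
  assumes "subring_of R" and "avoidance_ring R"
    and "subring_of S" and "R \<subseteq> S" and "S \<subseteq> frac_field R"
  shows "avoidance_ring S"
  unfolding avoidance_ring_def has_avoidance_def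
proof (intro allI impI, rule ccontr)
  fix I F
  assume I: "ideal_of S I" and F: "finite F \<and> (\<forall>J\<in>F. ideal_of S J) \<and> I \<subseteq> \<Union>F"
    and nc: "\<not> (\<exists>J\<in>F. I \<subseteq> J)"
  have "\<forall>J\<in>F. \<exists>x. x \<in> I \<and> x \<notin> J" using nc by blast
  then obtain x where x: "\<And>J. J \<in> F \<Longrightarrow> x J \<in> I \<and> x J \<notin> J" by metis
  have xf: "x ` F \<subseteq> frac_field R" using x I assms(5) by (auto simp: ideal_of_def)
  have "finite (x ` F)" using F by simp
  from common_denom[OF assms(1) this xf]
  obtain d where d: "d \<in> R" "d \<noteq> 0" "\<forall>y\<in>x ` F. d * y \<in> R" by blast
  define N where "N = {d * y | y. y \<in> I} \<inter> R"
  define G where "G = (\<lambda>J. {d * y | y. y \<in> J} \<inter> R) ` F"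
  have idl: "ideal_of R ({d * y | y. y \<in> J} \<inter> R)" if "ideal_of S J" for J
  proof -
    have J: "J \<subseteq> S" "0 \<in> J" "\<forall>a\<in>J. \<forall>b\<in>J. a + b \<in> J" "\<forall>a\<in>J. - a \<in> J"
      "\<forall>s\<in>S. \<forall>a\<in>J. s * a \<in> J" using that by (auto simp: ideal_of_def)
    have R: "\<forall>a\<in>R. \<forall>b\<in>R. a + b \<in> R \<and> a * b \<in> R \<and> - a \<in> R" "0 \<in> R"
      using assms(1) by (auto simp: subring_of_def)
    let ?K = "{d * y | y. y \<in> J} \<inter> R"
    have "0 \<in> ?K" using J(2) R(2) by (auto intro!: exI[of _ 0])
    moreover have "\<forall>a\<in>?K. \<forall>b\<in>?K. a + b \<in> ?K"
    proof (intro ballI)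
      fix a b assume "a \<in> ?K" "b \<in> ?K"
      then obtain u v where "u \<in> J" "v \<in> J" "a = d*u" "b = d*v" "a \<in> R" "b \<in> R" by auto
      then show "a + b \<in> ?K" using J(3) R(1) by (auto simp: distrib_left intro!: exI[of _ "u+v"])
    qed
    moreover have "\<forall>a\<in>?K. - a \<in> ?K"
    proof (intro ballI)
      fix a assume "a \<in> ?K"
      then obtain u where "u \<in> J" "a = d*u" "a \<in> R" by auto
      then show "- a \<in> ?K" using J(4) R(1) by (auto intro!: exI[of _ "-u"])
    qed
    moreover have "\<forall>s\<in>R. \<forall>a\<in>?K. s * a \<in> ?K"
    proof (intro ballI)
      fix s a assume "s \<in> R" "a \<in> ?K"
      then obtain u where "u \<in> J" "a = d*u" "a \<in> R" by auto
      moreover have "s * u \<in> J" using J(5) \<open>u \<in> J\<close> \<open>s \<in> R\<close> assms(4) by blast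
      moreover have "s * a \<in> R" using R(1) \<open>s \<in> R\<close> \<open>a \<in> R\<close> by blast
      moreover have "s * a = d * (s * u)" using \<open>a = d*u\<close> by (simp add: mult.left_commute)
      ultimately show "s * a \<in> ?K" by blast
    qed
    ultimately show ?thesis unfolding ideal_of_def by blast
  qed
  have "ideal_of R N" unfolding N_def using idl I by blast
  then have av: "has_avoidance R N" using assms(2) by (simp add: avoidance_ring_def)
  have "finite G" using F by (simp add: G_def)
  moreover have "\<forall>K\<in>G. ideal_of R K" using F idl by (auto simp: G_def)
  moreover have "N \<subseteq> \<Union>G"
  proof
    fix r assume "r \<in> N"
    then obtain y where y: "y \<in> I" "r = d * y" "r \<in> R" by (auto simp: N_def)
    then obtain J where "J \<in> F" "y \<in> J" using F by blast
    then show "r \<in> \<Union>G" using y by (auto simp: G_def)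
  qed
  ultimately obtain K where K: "K \<in> G" "N \<subseteq> K" using av unfolding has_avoidance_def by blast
  then obtain J where J: "J \<in> F" "K = {d * y | y. y \<in> J} \<inter> R" by (auto simp: G_def)
  have "d * x J \<in> N" using x[OF J(1)] d J(1) by (auto simp: N_def)
  then have "d * x J \<in> K" using K by blast
  then obtain z where "z \<in> J" "d * x J = d * z" using J by auto
  then have "x J \<in> J" using d(2) by simp
  then show False using x[OF J(1)] by blast
qed

end
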